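(* Let $\mu,\nu$ be Borel probability measures on $\mathbb{R}^d$ with compact supports and $\mu\ll\mathcal{L}^d$. Let $c:\mathbb{R}^d\times\mathbb{R}^d\to\mathbb{R}^+$ be continuous and satisfy: (i) for every $x$ there is a unique $y\in\mathbb{R}^d$ with $c(x,y)=0$, and for every $y\in\mathbb{R}^d$, $\inf_{x\in\mathbb{R}^d}c(x,y)=0$; (ii) for every $y$, $c(\cdot,y)$ is strictly quasiconvex: $c((1-t)x+t\bar x,y)<\max\{c(x,y),c(\bar x,y)\}$ for all $t\in(0,1)$ and all $x\neq\bar x$; (iii) for all $\lambda>0$ and $y\in\mathbb{R}^d$, the convex set $C_\lambda=\{z: c(z,y)\le\lambda\}$ has differentiable ($C^1$) boundary; (iv) for all $x,y,\tilde y\in\mathbb{R}^d$ and all $\lambda>0$: if $c(x,y)=c(x,\tilde y)=\lambda$ and $n_{c(\cdot,y)}(x)=n_{c(\cdot,\tilde y)}(x)$, then $y=\tilde y$. Let $\gamma\in\Pi(\mu,\nu)$ and $(x,\tilde y)\in R(\gamma)$. Then for every $y\in\mathbb{R}^d$ with $y\neq\tilde y$ there exists $(x',y')\in R(\gamma)$ such that $$\max\{c(x',y),c(x,y')\}<\max\{c(x,y),c(x',y')\}.$$ Moreover, if $x\in\mathrm{Leb}(A)$ for some Borel set $A\subset\mathbb{R}^d$, then $(x',y')$ can be chosen with $x'\in A$.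
   Context: $\Pi(\mu,\nu)$ is the set of Borel probability measures on $\mathbb{R}^d\times\mathbb{R}^d$ with first marginal $\mu$ and second marginal $\nu$. For $y\in\mathbb{R}^d$ and $x$ with $c(x,y)=\lambda>0$, $n_{c(\cdot,y)}(x)$ denotes the unit outer normal at $x$ to the sublevel set $\{z: c(z,y)\le\lambda\}$. For a Borel set $U\subset\mathbb{R}^d$, $\mathrm{Leb}(U)$ is the set of points $x\in U$ with $\lim_{r\to0^+}\mathcal{L}^d(U\cap B(x,r))/\mathcal{L}^d(B(x,r))=1$. For $\gamma\in\Pi(\mu,\nu)$, $y\in\mathbb{R}^d$, $r>0$, set $\gamma^{-1}(B(y,r)):=\pi^1\big((\mathbb{R}^d\times B(y,r))\cap\operatorname{supp}\gamma\big)$, where $\pi^1$ is the projection onto the first factor. A pair $(x,y)$ is $\gamma$-regular if $x\in\mathrm{Leb}(\gamma^{-1}(B(y,r)))$ for every $r>0$; $R(\gamma)$ denotes the set of $\gamma$-regular points. *)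

theory Defs
  imports "HOL-Probability.Probability"
begin

definition msupp :: "'a::metric_space measure \<Rightarrow> 'a set" where
  "msupp M = {x. \<forall>r>0. emeasure M (ball x r) > 0}"

definition borel_prob :: "'a::topological_space measure \<Rightarrow> bool" where
  "borel_prob M \<longleftrightarrow> prob_space M \<and> sets M = sets borel"

definition couplings :: "'a::euclidean_space measure \<Rightarrow> 'a measure \<Rightarrow> ('a \<times> 'a) measure set" where
  "couplings \<mu> \<nu> = {\<gamma>. borel_prob \<gamma> \<and> distr \<gamma> borel fst = \<mu> \<and> distr \<gamma> borel snd = \<nu>}"

definition Leb :: "'a::euclidean_space set \<Rightarrow> 'a set" where
  "Leb U = {x \<in> U. ((\<lambda>r. measure lebesgue (U \<inter> ball x r) / measure lebesgue (ball x r)) \<longlongrightarrow> 1) (at_right 0)}"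

definition preimg :: "('a::euclidean_space \<times> 'a) measure \<Rightarrow> 'a \<Rightarrow> real \<Rightarrow> 'a set" where
  "preimg \<gamma> y r = fst ` ((UNIV \<times> ball y r) \<inter> msupp \<gamma>)"

definition regular_pts :: "('a::euclidean_space \<times> 'a) measure \<Rightarrow> ('a \<times> 'a) set" where
  "regular_pts \<gamma> = {(x, y). \<forall>r>0. x \<in> Leb (preimg \<gamma> y r)}"

definition outer_normal :: "'a::euclidean_space set \<Rightarrow> 'a \<Rightarrow> 'a" where
  "outer_normal C x = (THE n. norm n = 1 \<and> (\<forall>z\<in>C. n \<bullet> (z - x) \<le> 0))"

definition C1_boundary :: "'a::euclidean_space set \<Rightarrow> bool" where
  "C1_boundary C \<longleftrightarrow> (\<forall>p \<in> frontier C. \<exists>U g G. open U \<and> p \<in> U \<and>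
      (\<forall>z\<in>U. (g has_derivative (\<lambda>h. G z \<bullet> h)) (at z)) \<and> continuous_on U G \<and> G p \<noteq> 0 \<and>
      C \<inter> U = {z \<in> U. g z \<le> (0::real)})"

end

theory Submission
  imports Defs
begin
lemma lm_int_ball: "E \<in> sets lebesgue \<Longrightarrow> E \<inter> ball x r \<in> lmeasurable"
  using fmeasurable_Int_fmeasurable[OF lmeasurable_ball, of E x r] by (simp add: Int_commute)

lemma Leb_mono:
  fixes E E' :: "'a::euclidean_space set"
  assumes E: "E \<in> sets lebesgue" and E': "E' \<in> sets lebesgue" and sub: "E \<subseteq> E'"
    and x: "x \<in> Leb E"
  shows "x \<in> Leb E'"
proof -
  let ?m = "measure lebesgue"
  have t: "((\<lambda>r. ?m (E \<inter> ball x r) / ?m (ball x r)) \<longlongrightarrow> 1) (at_right 0)" and "x \<in> E"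
    using x by (auto simp: Leb_def)
  have ev: "eventually (\<lambda>r. ?m (E \<inter> ball x r) / ?m (ball x r) \<le> ?m (E' \<inter> ball x r) / ?m (ball x r)
      \<and> ?m (E' \<inter> ball x r) / ?m (ball x r) \<le> 1) (at_right 0)"
    unfolding eventually_at_right_field
  proof (intro exI[of _ 1] conjI allI impI)
    fix r :: real assume r: "r > 0" "r < 1"
    have pos: "?m (ball x r) > 0" using content_ball_pos[OF r(1)] by simp
    have l1: "E \<inter> ball x r \<in> lmeasurable" "E' \<inter> ball x r \<in> lmeasurable"
      using E E' by (auto intro!: lm_int_ball)
    have "?m (E \<inter> ball x r) \<le> ?m (E' \<inter> ball x r)"
      using l1 sub by (intro measure_mono_fmeasurable) auto
    then show "?m (E \<inter> ball x r) / ?m (ball x r) \<le> ?m (E' \<inter> ball x r) / ?m (ball x r)"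
      using pos by (simp add: divide_right_mono)
    have "?m (E' \<inter> ball x r) \<le> ?m (ball x r)"
      using l1 by (intro measure_mono_fmeasurable) auto
    then show "?m (E' \<inter> ball x r) / ?m (ball x r) \<le> 1" using pos by simp
  qed simp
  have "((\<lambda>r. ?m (E' \<inter> ball x r) / ?m (ball x r)) \<longlongrightarrow> 1) (at_right 0)"
    by (rule tendsto_sandwich[OF _ _ t tendsto_const]) (use ev in \<open>auto elim: eventually_mono\<close>)
  then show ?thesis using sub \<open>x \<in> E\<close> by (auto simp: Leb_def)
qed

lemma density_theorem:
  fixes E :: "'a::euclidean_space set"
  assumes E: "E \<in> sets lebesgue"
  shows "negligible (E - Leb E)"
proof -
  let ?m = "measure lebesgue"
  define S where "S k = {x\<in>E. \<forall>d0>0. \<exists>d. 0<d \<and> d<d0 \<and>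
      ?m (ball x d) < real (Suc k) * ?m (ball x d - E)}" for k :: nat
  have sub: "E - Leb E \<subseteq> (\<Union>k. S k)"
  proof
    fix x assume x: "x \<in> E - Leb E"
    show "x \<in> (\<Union>k. S k)"
    proof (rule ccontr)
      assume "x \<notin> (\<Union>k. S k)"
      then have nS: "\<forall>k. \<exists>d0>0. \<forall>d. 0<d \<and> d<d0 \<longrightarrow> real (Suc k) * ?m (ball x d - E) \<le> ?m (ball x d)"
      proof (intro allI)
        fix k
        have "x \<notin> S k" using \<open>x \<notin> (\<Union>k. S k)\<close> by blast
        then have "\<not> (\<forall>d0>0. \<exists>d. 0<d \<and> d<d0 \<and> ?m (ball x d) < real (Suc k) * ?m (ball x d - E))"
          using x unfolding S_def by blast
        then obtain d0 where "d0 > 0" "\<forall>d. \<not> (0<d \<and> d<d0 \<and> ?m (ball x d) < real (Suc k) * ?m (ball x d - E))"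
          by blast
        then show "\<exists>d0>0. \<forall>d. 0<d \<and> d<d0 \<longrightarrow> real (Suc k) * ?m (ball x d - E) \<le> ?m (ball x d)"
          by (meson not_less)
      qed
      have "((\<lambda>r. ?m (E \<inter> ball x r) / ?m (ball x r)) \<longlongrightarrow> 1) (at_right 0)"
      proof (rule tendstoI)
        fix e :: real assume e: "e > 0"
        obtain k :: nat where k: "1 / real (Suc k) < e"
          using e by (metis nat_approx_posE)
        obtain d0 where d0: "d0 > 0" and
          hd: "\<And>d. 0<d \<Longrightarrow> d<d0 \<Longrightarrow> real (Suc k) * ?m (ball x d - E) \<le> ?m (ball x d)"
          using nS by blast
        show "eventually (\<lambda>r. dist (?m (E \<inter> ball x r) / ?m (ball x r)) 1 < e) (at_right 0)"
          unfolding eventually_at_right_field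
        proof (intro exI[of _ d0] conjI allI impI)
          fix r :: real assume r: "r > 0" "r < d0"
          have pos: "?m (ball x r) > 0" using content_ball_pos[OF r(1)] by simp
          have l1: "E \<inter> ball x r \<in> lmeasurable"
            using E by (auto intro!: lm_int_ball)
          have eq: "?m (ball x r - E) = ?m (ball x r) - ?m (E \<inter> ball x r)"
          proof -
            have "ball x r - E = ball x r - (E \<inter> ball x r)" by auto
            then show ?thesis using l1
              by (simp add: measure_Diff emeasure_eq_measure2[OF lmeasurable_ball] fmeasurable.Int)
          qed
          have le: "?m (E \<inter> ball x r) \<le> ?m (ball x r)"
            using l1 by (intro measure_mono_fmeasurable) auto
          have "real (Suc k) * (?m (ball x r) - ?m (E \<inter> ball x r)) \<le> ?m (ball x r)"
            using hd[OF r] eq by simp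
          then have h1: "?m (ball x r) - ?m (E \<inter> ball x r) \<le> ?m (ball x r) / real (Suc k)"
            by (simp add: pos_le_divide_eq mult.commute)
          have "1 - ?m (E \<inter> ball x r) / ?m (ball x r) = (?m (ball x r) - ?m (E \<inter> ball x r)) / ?m (ball x r)"
            using pos by (simp add: diff_divide_distrib)
          also have "\<dots> \<le> (?m (ball x r) / real (Suc k)) / ?m (ball x r)"
            using h1 pos by (intro divide_right_mono) auto
          also have "\<dots> = 1 / real (Suc k)" using pos by simp
          finally have "1 - ?m (E \<inter> ball x r) / ?m (ball x r) \<le> 1 / real (Suc k)" .
          moreover have "?m (E \<inter> ball x r) / ?m (ball x r) \<le> 1" using le pos by simp
          ultimately show "dist (?m (E \<inter> ball x r) / ?m (ball x r)) 1 < e"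
            using k by (simp add: dist_real_def)
        qed (use d0 in auto)
      qed
      then show False using x by (auto simp: Leb_def)
    qed
  qed
  have neg: "negligible (S k)" for k
    unfolding negligible_outer_le
  proof (intro allI impI)
    fix e :: real assume e: "e > 0"
    obtain Op where Op: "open Op" "E \<subseteq> Op" "Op - E \<in> lmeasurable"
      and Oe: "emeasure lebesgue (Op - E) < ennreal (e / real (Suc k))"
      using sets_lebesgue_outer_open[OF E, of "e / real (Suc k)"] e by auto
    define K where "K = {(z,d). z \<in> S k \<and> 0 < d \<and> ball z d \<subseteq> Op \<and>
        ?m (ball z d) < real (Suc k) * ?m (ball z d - E)}"
    have cov: "\<exists>i. i \<in> K \<and> x \<in> ball (fst i) (snd i) \<and> snd i < d" if "x \<in> S k" "0 < d" for x d
    proof -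
      have "x \<in> Op" using that Op S_def by auto
      then obtain \<rho> where \<rho>: "\<rho> > 0" "ball x \<rho> \<subseteq> Op" using Op(1) openE by blast
      have hS: "\<forall>d0>0. \<exists>d. 0<d \<and> d<d0 \<and> ?m (ball x d) < real (Suc k) * ?m (ball x d - E)"
        using that(1) unfolding S_def by blast
      have "min d \<rho> > 0" using that \<rho> by simp
      then obtain d' where d': "0 < d'" "d' < min d \<rho>" "?m (ball x d') < real (Suc k) * ?m (ball x d' - E)"
        using hS by blast
      have "ball x d' \<subseteq> ball x \<rho>" using d' by (intro subset_ball) simp
      then have "ball x d' \<subseteq> Op" using \<rho> by blast
      then show ?thesis using d' that by (intro exI[of _ "(x,d')"]) (auto simp: K_def)
    qed
    obtain C where C: "countable C" "C \<subseteq> K"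
      and pw: "pairwise (\<lambda>i j. disjnt (ball (fst i) (snd i)) (ball (fst j) (snd j))) C"
      and ng: "negligible (S k - (\<Union>i\<in>C. ball (fst i) (snd i)))"
      using Vitali_covering_theorem_balls[of "S k" K fst snd, OF cov] by blast
    define B where "B i = ball (fst i) (snd i)" for i :: "'a \<times> real"
    have disj: "disjoint_family_on B C"
      using pw by (auto simp: disjoint_family_on_def pairwise_def disjnt_def B_def)
    have disj2: "disjoint_family_on (\<lambda>i. B i - E) C"
      using disj unfolding disjoint_family_on_def by blast
    have "emeasure lebesgue (\<Union>i\<in>C. B i) = (\<integral>\<^sup>+i. emeasure lebesgue (B i) \<partial>count_space C)"
      by (rule emeasure_UN_countable) (auto simp: B_def[symmetric] C disj, simp add: B_def)
    also have "\<dots> \<le> (\<integral>\<^sup>+i. of_nat (Suc k) * emeasure lebesgue (B i - E) \<partial>count_space C)"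
    proof (rule nn_integral_mono)
      fix i assume "i \<in> space (count_space C)"
      then have "i \<in> K" using C by auto
      then have lt: "?m (B i) < real (Suc k) * ?m (B i - E)" by (auto simp: K_def B_def)
      have l1: "B i \<in> lmeasurable" "B i - E \<in> lmeasurable"
        using E by (auto simp: B_def intro!: fmeasurable_Diff)
      have "emeasure lebesgue (B i) = ennreal (?m (B i))" using l1 emeasure_eq_measure2 by blast
      also have "\<dots> \<le> ennreal (real (Suc k) * ?m (B i - E))" using lt by (intro ennreal_leI) simp
      also have "\<dots> = of_nat (Suc k) * ennreal (?m (B i - E))"
        by (simp add: ennreal_mult' ennreal_of_nat_eq_real_of_nat)
      also have "\<dots> = of_nat (Suc k) * emeasure lebesgue (B i - E)"
        using l1 emeasure_eq_measure2 by metis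
      finally show "emeasure lebesgue (B i) \<le> of_nat (Suc k) * emeasure lebesgue (B i - E)" .
    qed
    also have "\<dots> = of_nat (Suc k) * (\<integral>\<^sup>+i. emeasure lebesgue (B i - E) \<partial>count_space C)"
      by (rule nn_integral_cmult) simp
    also have "(\<integral>\<^sup>+i. emeasure lebesgue (B i - E) \<partial>count_space C) = emeasure lebesgue (\<Union>i\<in>C. B i - E)"
      by (rule emeasure_UN_countable[symmetric]) (use C disj2 E in \<open>auto simp: B_def\<close>)
    also have "emeasure lebesgue (\<Union>i\<in>C. B i - E) \<le> emeasure lebesgue (Op - E)"
    proof (rule emeasure_mono)
      show "(\<Union>i\<in>C. B i - E) \<subseteq> Op - E"
      proof
        fix z assume "z \<in> (\<Union>i\<in>C. B i - E)"
        then obtain i where "i \<in> C" "z \<in> B i" "z \<notin> E" by blast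
        moreover have "i \<in> K" using \<open>i \<in> C\<close> C(2) by blast
        then have "B i \<subseteq> Op" by (cases i) (simp add: K_def B_def)
        ultimately show "z \<in> Op - E" by blast
      qed
    qed (use Op in auto)
    finally have U: "emeasure lebesgue (\<Union>i\<in>C. B i) \<le> of_nat (Suc k) * emeasure lebesgue (Op - E)"
      by (auto simp: mult_left_mono)
    also have "\<dots> < of_nat (Suc k) * ennreal (e / real (Suc k))"
      by (rule ennreal_mult_strict_left_mono[OF Oe]) (metis of_nat_0_less_iff zero_less_Suc, rule of_nat_less_top)
    also have "\<dots> = ennreal (real (Suc k)) * ennreal (e / real (Suc k))"
      by (simp only: ennreal_of_nat_eq_real_of_nat)
    also have "\<dots> = ennreal (real (Suc k) * (e / real (Suc k)))"
      using e by (intro ennreal_mult[symmetric]) auto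
    also have "\<dots> = ennreal e" by (simp del: of_nat_Suc)
    finally have Ue: "emeasure lebesgue (\<Union>i\<in>C. B i) < ennreal e" .
    define T where "T = (\<Union>i\<in>C. B i) \<union> (S k - (\<Union>i\<in>C. B i))"
    have Um: "(\<Union>i\<in>C. B i) \<in> sets lebesgue"
      using C(1) by (intro sets.countable_UN'') (auto simp: B_def)
    have Nm: "(S k - (\<Union>i\<in>C. B i)) \<in> null_sets lebesgue"
      using ng negligible_iff_null_sets by (auto simp: B_def)
    have eT: "emeasure lebesgue T = emeasure lebesgue (\<Union>i\<in>C. B i)"
      unfolding T_def by (rule emeasure_Un_null_set[OF Um Nm])
    have Tm: "T \<in> sets lebesgue" unfolding T_def using Um Nm by (intro sets.Un) auto
    have "emeasure lebesgue T < \<infinity>" using order.strict_trans[OF Ue ennreal_less_top] eT by simp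
    then have Tf: "T \<in> lmeasurable" using Tm by (intro fmeasurableI) auto
    show "\<exists>T. S k \<subseteq> T \<and> T \<in> lmeasurable \<and> ?m T \<le> e"
    proof (intro exI[of _ T] conjI)
      show "S k \<subseteq> T" by (auto simp: T_def)
      have "ennreal (?m T) < ennreal e" using emeasure_eq_measure2[OF Tf] eT Ue by simp
      then show "?m T \<le> e" using ennreal_less_iff[OF measure_nonneg] less_imp_le by blast
    qed (fact Tf)
  qed
  have "negligible (\<Union>k. S k)"
    by (rule negligible_countable_Union) (auto simp: neg)
  then show ?thesis using sub negligible_subset by blast
qed

lemma msupp_closed:
  fixes M :: "'a::metric_space measure"
  assumes "sets M = sets borel"
  shows "closed (msupp M)"
proof -
  have "open (- msupp M)"
    unfolding open_contains_ball
  proof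
    fix x assume "x \<in> - msupp M"
    then obtain r where r: "r > 0" "\<not> emeasure M (ball x r) > 0" by (auto simp: msupp_def)
    then have z: "emeasure M (ball x r) = 0" by (simp add: not_gr_zero)
    have "ball x (r/2) \<subseteq> - msupp M"
    proof
      fix z assume "z \<in> ball x (r/2)"
      then have zx: "dist x z < r/2" by simp
      have sub: "ball z (r/2) \<subseteq> ball x r"
      proof
        fix w assume "w \<in> ball z (r/2)"
        then have "dist z w < r/2" by simp
        moreover have "dist x w \<le> dist x z + dist z w" by (rule dist_triangle)
        ultimately show "w \<in> ball x r" using zx by simp
      qed
      have "emeasure M (ball z (r/2)) \<le> emeasure M (ball x r)"
        by (rule emeasure_mono[OF sub]) (simp add: assms)
      then have "emeasure M (ball z (r/2)) = 0" using z by simp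
      then have "\<exists>r>0. \<not> 0 < emeasure M (ball z r)" using r(1) by (intro exI[of _ "r/2"]) simp
      then show "z \<in> - msupp M" by (simp add: msupp_def)
    qed
    then show "\<exists>e>0. ball x e \<subseteq> - msupp M" using r by (intro exI[of _ "r/2"]) auto
  qed
  then show ?thesis by (simp add: closed_def)
qed

lemma proj_ball_borel:
  fixes F :: "('a::euclidean_space \<times> 'a) set"
  assumes F: "closed F"
  shows "fst ` ((UNIV \<times> ball y r) \<inter> F) \<in> sets borel"
proof -
  define K where "K n = (cball 0 (real n) \<times> cball y (r - 1 / real (Suc n))) \<inter> F" for n
  have eq: "(UNIV \<times> ball y r) \<inter> F = (\<Union>n. K n)"
  proof
    show "(\<Union>n. K n) \<subseteq> (UNIV \<times> ball y r) \<inter> F"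
    proof
      fix p assume "p \<in> (\<Union>n. K n)"
      then obtain n where "p \<in> K n" by blast
      then have "p \<in> F" "snd p \<in> cball y (r - 1/real (Suc n))" unfolding K_def by (auto simp: mem_Times_iff)
      then have "p \<in> F" "dist y (snd p) \<le> r - 1/real (Suc n)" by simp_all
      moreover have "0 < 1/real (Suc n)" by simp
      ultimately have "dist y (snd p) < r" "p \<in> F" by linarith+
      then show "p \<in> (UNIV \<times> ball y r) \<inter> F"
        by (cases p) auto
    qed
    show "(UNIV \<times> ball y r) \<inter> F \<subseteq> (\<Union>n. K n)"
    proof
      fix p assume p: "p \<in> (UNIV \<times> ball y r) \<inter> F"
      obtain a b where ab: "p = (a,b)" by (cases p)
      have db: "dist y b < r" using p ab by auto
      obtain n1 :: nat where n1: "norm a \<le> real n1" using real_arch_simple by blast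
      obtain n2 :: nat where n2: "1 / real (Suc n2) < r - dist y b"
      proof (rule nat_approx_posE)
        show "0 < r - dist y b" using db by simp
      qed
      define n where "n = max n1 n2"
      have "norm a \<le> real n" using n1 by (simp add: n_def)
      moreover have "1 / real (Suc n) \<le> 1 / real (Suc n2)"
        by (simp add: n_def divide_left_mono)
      ultimately have "dist y b \<le> r - 1 / real (Suc n)" using n2 by linarith
      moreover have "a \<in> cball 0 (real n)" using \<open>norm a \<le> real n\<close> by simp
      moreover have "p \<in> F" using p by blast
      ultimately have "p \<in> K n" unfolding K_def ab by simp
      then show "p \<in> (\<Union>n. K n)" by blast
    qed
  qed
  have cK: "compact (K n)" for n
    unfolding K_def by (intro compact_Int_closed compact_Times compact_cball F)
  have "closed (fst ` K n)" for n
    by (intro compact_imp_closed compact_continuous_image cK continuous_on_fst continuous_on_id)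
  then have "fst ` K n \<in> sets borel" for n by simp
  then have "(\<Union>n. fst ` K n) \<in> sets borel" by auto
  moreover have "fst ` ((UNIV \<times> ball y r) \<inter> F) = (\<Union>n. fst ` K n)" unfolding eq by (rule image_UN)
  ultimately show ?thesis by (simp only:)
qed

lemma preimg_lebesgue:
  fixes \<gamma> :: "('a::euclidean_space \<times> 'a) measure"
  assumes "sets \<gamma> = sets borel"
  shows "preimg \<gamma> y r \<in> sets lebesgue"
proof -
  have "preimg \<gamma> y r \<in> sets borel"
    unfolding preimg_def by (rule proj_ball_borel[OF msupp_closed[OF assms]])
  then show ?thesis by simp
qed

lemma regular_ae:
  fixes \<gamma> :: "('a::euclidean_space \<times> 'a) measure"
  assumes sg: "sets \<gamma> = sets borel"
  obtains N where "negligible N"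
    "\<And>x' y'. (x', y') \<in> msupp \<gamma> \<Longrightarrow> x' \<notin> N \<Longrightarrow> (x', y') \<in> regular_pts \<gamma>"
proof -
  obtain D :: "'a set" where D: "countable D" "\<And>U. open U \<Longrightarrow> U \<noteq> {} \<Longrightarrow> \<exists>y\<in>D. y \<in> U"
    using countable_dense_exists by blast
  define I where "I = D \<times> (\<rat> :: real set)"
  define N where "N = (\<Union>i\<in>I. preimg \<gamma> (fst i) (snd i) - Leb (preimg \<gamma> (fst i) (snd i)))"
  have "countable I" unfolding I_def using D(1) countable_rat by blast
  then have negN: "negligible N" unfolding N_def
  proof (intro negligible_countable_Union countable_image)
    show "countable I" by fact
    fix T assume "T \<in> (\<lambda>i. preimg \<gamma> (fst i) (snd i) - Leb (preimg \<gamma> (fst i) (snd i))) ` I"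
    then obtain i where "T = preimg \<gamma> (fst i) (snd i) - Leb (preimg \<gamma> (fst i) (snd i))" by blast
    then show "negligible T" using density_theorem[OF preimg_lebesgue[OF sg]] by simp
  qed
  have reg: "(x', y') \<in> regular_pts \<gamma>" if xy: "(x', y') \<in> msupp \<gamma>" "x' \<notin> N" for x' y'
  proof (simp only: regular_pts_def mem_Collect_eq case_prod_conv, intro allI impI)
    fix s :: real assume s: "s > 0"
    have "ball y' (s/4) \<noteq> {}" using s by simp
    then obtain d where d: "d \<in> D" "d \<in> ball y' (s/4)" using D(2)[OF open_ball] by blast
    have "s/4 < s/2" using s by simp
    then obtain q where q: "q \<in> \<rat>" "s/4 < q" "q < s/2" using Rats_dense_in_real by blast
    have dyd: "dist y' d < s/4" using d(2) by simp
    then have "dist d y' < q" using q by (simp add: dist_commute)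
    then have y'in: "y' \<in> ball d q" by simp
    have bsub: "ball d q \<subseteq> ball y' s"
    proof
      fix z assume "z \<in> ball d q"
      then have dz: "dist d z < q" by simp
      have "dist y' z \<le> dist y' d + dist d z" by (rule dist_triangle)
      then have "dist y' z < s" using dz dyd q by linarith
      then show "z \<in> ball y' s" by simp
    qed
    have "(x', y') \<in> (UNIV \<times> ball d q) \<inter> msupp \<gamma>" using xy(1) y'in by simp
    then have xin: "x' \<in> preimg \<gamma> d q" unfolding preimg_def by (rule rev_image_eqI) simp
    have dqI: "(d, q) \<in> I" using d q by (simp add: I_def)
    have "x' \<notin> preimg \<gamma> d q - Leb (preimg \<gamma> d q)"
    proof
      assume "x' \<in> preimg \<gamma> d q - Leb (preimg \<gamma> d q)"
      then have "x' \<in> N" unfolding N_def using dqI by (intro UN_I[of "(d,q)"]) simp_all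
      then show False using xy(2) by contradiction
    qed
    then have "x' \<in> Leb (preimg \<gamma> d q)" using xin by blast
    moreover have "preimg \<gamma> d q \<subseteq> preimg \<gamma> y' s" unfolding preimg_def using bsub by auto
    ultimately show "x' \<in> Leb (preimg \<gamma> y' s)"
      using Leb_mono[OF preimg_lebesgue[OF sg] preimg_lebesgue[OF sg]] by blast
  qed
  show thesis using that negN reg by blast
qed

lemma ball_diff_measure:
  fixes E :: "'a::euclidean_space set"
  assumes E: "E \<in> sets lebesgue"
  shows "measure lebesgue (ball x r - E) = measure lebesgue (ball x r) - measure lebesgue (E \<inter> ball x r)"
proof -
  have l1: "E \<inter> ball x r \<in> lmeasurable" using E by (rule lm_int_ball)
  have "ball x r - E = ball x r - (E \<inter> ball x r)" by auto
  then show ?thesis using l1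
    by (simp add: measure_Diff emeasure_eq_measure2[OF lmeasurable_ball] fmeasurable.Int)
qed

lemma combine:
  fixes \<gamma> :: "('a::euclidean_space \<times> 'a) measure" and Q :: "'a \<Rightarrow> 'a \<Rightarrow> bool"
  assumes sg: "sets \<gamma> = sets borel"
    and r: "r > 0" and xP: "x \<in> Leb (preimg \<gamma> yt r)"
    and A: "A \<in> sets lebesgue" and xA: "x \<in> Leb A"
    and \<delta>: "\<delta> > 0" and \<tau>: "\<tau> > 0"
    and good: "\<And>t q y'. 0 < t \<Longrightarrow> t \<le> \<tau> \<Longrightarrow> q \<in> ball p \<delta> \<Longrightarrow> y' \<in> ball yt r \<Longrightarrow> Q (x + t *\<^sub>R (q - x)) y'"
  shows "\<exists>(x',y') \<in> regular_pts \<gamma>. x' \<in> A \<and> Q x' y'"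
proof -
  obtain N where negN: "negligible N"
    and regN: "\<And>x' y'. (x', y') \<in> msupp \<gamma> \<Longrightarrow> x' \<notin> N \<Longrightarrow> (x', y') \<in> regular_pts \<gamma>"
    using regular_ae[OF sg] by blast
  let ?m = "measure lebesgue"
  define P where "P = preimg \<gamma> yt r"
  have Pm: "P \<in> sets lebesgue" unfolding P_def by (rule preimg_lebesgue[OF sg])
  define L where "L = norm (p - x) + \<delta>"
  have L: "L > 0" using \<delta> by (simp add: L_def add_nonneg_pos)
  define \<kappa> where "\<kappa> = (\<delta> / L) ^ DIM('a)"
  have \<kappa>: "\<kappa> > 0" using \<delta> L by (simp add: \<kappa>_def)
  have tP: "((\<lambda>r. ?m (P \<inter> ball x r) / ?m (ball x r)) \<longlongrightarrow> 1) (at_right 0)"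
    using xP by (simp add: Leb_def P_def)
  have tA: "((\<lambda>r. ?m (A \<inter> ball x r) / ?m (ball x r)) \<longlongrightarrow> 1) (at_right 0)"
    using xA by (simp add: Leb_def)
  have lt1: "1 - \<kappa>/3 < 1" using \<kappa> by simp
  have ev: "eventually (\<lambda>\<rho>. 1 - \<kappa>/3 < ?m (P \<inter> ball x \<rho>) / ?m (ball x \<rho>) \<and>
      1 - \<kappa>/3 < ?m (A \<inter> ball x \<rho>) / ?m (ball x \<rho>)) (at_right 0)"
    using order_tendstoD(1)[OF tP lt1] order_tendstoD(1)[OF tA lt1] by (rule eventually_conj)
  then obtain b where b: "b > 0" and hb: "\<And>\<rho>. \<rho> > 0 \<Longrightarrow> \<rho> < b \<Longrightarrow>
      1 - \<kappa>/3 < ?m (P \<inter> ball x \<rho>) / ?m (ball x \<rho>) \<and> 1 - \<kappa>/3 < ?m (A \<inter> ball x \<rho>) / ?m (ball x \<rho>)"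
    unfolding eventually_at_right_field by auto
  define \<rho> where "\<rho> = min (b/2) (\<tau> * L / 2)"
  have tL: "\<tau> * L > 0" by (rule mult_pos_pos[OF \<tau> L])
  have "\<rho> \<le> b/2" "\<rho> \<le> \<tau> * L / 2" by (simp_all add: \<rho>_def)
  moreover have "\<rho> > 0" using b tL by (simp add: \<rho>_def)
  ultimately have \<rho>: "\<rho> > 0" "\<rho> < b" "\<rho> < \<tau> * L" using b tL by linarith+
  have hP: "1 - \<kappa>/3 < ?m (P \<inter> ball x \<rho>) / ?m (ball x \<rho>)"
   and hA: "1 - \<kappa>/3 < ?m (A \<inter> ball x \<rho>) / ?m (ball x \<rho>)" using hb[OF \<rho>(1,2)] by auto
  have mB: "?m (ball x \<rho>) > 0" using content_ball_pos[OF \<rho>(1)] by simp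
  define t where "t = \<rho> / L"
  have t: "t > 0" "t \<le> \<tau>" using \<rho> L by (auto simp: t_def pos_divide_le_eq)
  define c' where "c' = x + t *\<^sub>R (p - x)"
  define B' where "B' = ball c' (t * \<delta>)"
  have B'sub: "B' \<subseteq> ball x \<rho>"
  proof
    fix z assume "z \<in> B'"
    then have dz: "dist c' z < t * \<delta>" by (simp add: B'_def)
    have dc: "dist x c' = t * norm (p - x)" using t by (simp add: c'_def dist_norm)
    have "dist x z \<le> dist x c' + dist c' z" by (rule dist_triangle)
    also have "\<dots> < t * norm (p - x) + t * \<delta>" using dc dz by simp
    also have "\<dots> = t * L" by (simp add: L_def algebra_simps)
    also have "\<dots> = \<rho>" using L by (simp add: t_def)
    finally show "z \<in> ball x \<rho>" by simp
  qed
  have mB': "?m B' = \<kappa> * ?m (ball x \<rho>)"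
  proof -
    have "t * \<delta> = (\<delta> / L) * \<rho>" by (simp add: t_def)
    then have "(t * \<delta>) ^ DIM('a) = \<kappa> * \<rho> ^ DIM('a)" unfolding \<kappa>_def by (simp only: power_mult_distrib)
    moreover have "Henstock_Kurzweil_Integration.content (ball c' (t * \<delta>)) = unit_ball_vol (DIM('a)) * (t * \<delta>) ^ DIM('a)"
      by (rule content_ball) (use t \<delta> in simp)
    moreover have "Henstock_Kurzweil_Integration.content (ball x \<rho>) = unit_ball_vol (DIM('a)) * \<rho> ^ DIM('a)"
      by (rule content_ball) (use \<rho> in simp)
    ultimately show ?thesis by (simp add: B'_def)
  qed
  have m1: "?m (ball x \<rho> - P) < \<kappa>/3 * ?m (ball x \<rho>)"
  proof -
    have "(1 - \<kappa>/3) * ?m (ball x \<rho>) < ?m (P \<inter> ball x \<rho>)" using hP mB by (simp add: pos_less_divide_eq)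
    then show ?thesis using ball_diff_measure[OF Pm, of x \<rho>] by (simp add: algebra_simps)
  qed
  have m2: "?m (ball x \<rho> - A) < \<kappa>/3 * ?m (ball x \<rho>)"
  proof -
    have "(1 - \<kappa>/3) * ?m (ball x \<rho>) < ?m (A \<inter> ball x \<rho>)" using hA mB by (simp add: pos_less_divide_eq)
    then show ?thesis using ball_diff_measure[OF A, of x \<rho>] by (simp add: algebra_simps)
  qed
  define G where "G = P \<inter> A \<inter> B'"
  have "B' \<in> sets lebesgue" unfolding B'_def by (rule fmeasurableD[OF lmeasurable_ball])
  then have Gm: "G \<in> sets lebesgue" using Pm A unfolding G_def by (intro sets.Int)
  have s1: "ball x \<rho> - P \<in> sets lebesgue" "ball x \<rho> - A \<in> sets lebesgue" using Pm A by auto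
  have "B' \<subseteq> (G \<union> (ball x \<rho> - P)) \<union> (ball x \<rho> - A)" using B'sub by (auto simp: G_def)
  moreover have "(G \<union> (ball x \<rho> - P)) \<union> (ball x \<rho> - A) \<in> lmeasurable"
    by (rule fmeasurableI2[OF lmeasurable_ball[of x \<rho>]]) (use Gm s1 B'sub in \<open>auto simp: G_def\<close>)
  ultimately have "?m B' \<le> ?m ((G \<union> (ball x \<rho> - P)) \<union> (ball x \<rho> - A))"
    by (intro measure_mono_fmeasurable) (auto simp: B'_def)
  also have "\<dots> \<le> ?m (G \<union> (ball x \<rho> - P)) + ?m (ball x \<rho> - A)"
    using Gm s1 by (intro measure_Un_le) auto
  also have "\<dots> \<le> ?m G + ?m (ball x \<rho> - P) + ?m (ball x \<rho> - A)"
    using measure_Un_le[OF Gm s1(1)] by simp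
  finally have fin: "?m B' \<le> ?m G + ?m (ball x \<rho> - P) + ?m (ball x \<rho> - A)" .
  have kp: "\<kappa> * ?m (ball x \<rho>) > 0" using \<kappa> mB by simp
  have "?m G > 0" using fin m1 m2 mB' kp by linarith
  then have "\<not> G \<subseteq> N" using negN negligible_subset negligible_imp_measure0 by (metis less_irrefl)
  then obtain x' where x': "x' \<in> G" "x' \<notin> N" by blast
  then have "x' \<in> P" by (simp add: G_def)
  then obtain pr where pr: "pr \<in> (UNIV \<times> ball yt r) \<inter> msupp \<gamma>" "x' = fst pr"
    unfolding P_def preimg_def by blast
  obtain y' where y': "pr = (x', y')" using pr(2) by (cases pr) simp
  have y'b: "y' \<in> ball yt r" and ms: "(x', y') \<in> msupp \<gamma>" using pr(1) y' by auto
  have regx: "(x', y') \<in> regular_pts \<gamma>" by (rule regN[OF ms x'(2)])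
  define q where "q = x + (1 / t) *\<^sub>R (x' - x)"
  have xq: "x + t *\<^sub>R (q - x) = x'" using t by (simp add: q_def)
  have "x' \<in> B'" using x' by (simp add: G_def)
  then have "dist c' x' < t * \<delta>" by (simp add: B'_def)
  moreover have "dist p q = dist c' x' / t"
  proof -
    have "c' - x' = t *\<^sub>R (p - q)" using t by (simp add: c'_def q_def algebra_simps)
    then have "dist c' x' = t * dist p q" using t by (simp add: dist_norm)
    then show ?thesis using t by simp
  qed
  ultimately have "dist p q < \<delta>" using t by (simp add: pos_divide_less_eq mult.commute)
  then have "q \<in> ball p \<delta>" by simp
  from good[OF t this y'b] have "Q x' y'" using xq by simp
  moreover have "x' \<in> A" using x' by (simp add: G_def)
  ultimately show ?thesis using regx by blast
qed

lemma unit_inner_lt1: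
  fixes a b :: "'a::real_inner"
  assumes "norm a = 1" "norm b = 1" "a \<noteq> b"
  shows "a \<bullet> b < 1"
proof -
  have "0 < (norm (a - b))^2" using assms(3) by simp
  also have "(norm (a - b))^2 = a \<bullet> a - 2 * (a \<bullet> b) + b \<bullet> b"
    by (simp add: power2_norm_eq_inner inner_diff inner_commute)
  also have "a \<bullet> a = 1" using assms(1) by (metis power2_norm_eq_inner power_one)
  also have "b \<bullet> b = 1" using assms(2) by (metis power2_norm_eq_inner power_one)
  finally show ?thesis by simp
qed

lemma qc_ext:
  fixes c :: "'a::real_vector \<Rightarrow> 'b \<Rightarrow> real"
  assumes c_ii: "\<And>y x xb t. x \<noteq> xb \<Longrightarrow> 0 < t \<Longrightarrow> t < 1 \<Longrightarrow>
                 c ((1 - t) *\<^sub>R x + t *\<^sub>R xb) y < max (c x y) (c xb y)"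
    and w: "c w y < c x y" and t: "t > 0"
  shows "c x y < c (x + t *\<^sub>R (x - w)) y"
proof -
  define x' where "x' = x + t *\<^sub>R (x - w)"
  define s where "s = t / (1 + t)"
  have s: "0 < s" "s < 1" using t by (auto simp: s_def)
  have t1: "1 + t \<noteq> 0" using t by simp
  have s1: "1 - s = 1 / (1 + t)" using t1 by (simp add: s_def field_simps)
  have x'e: "x' = (1 + t) *\<^sub>R x - t *\<^sub>R w" by (simp add: x'_def algebra_simps)
  have "(1 - s) *\<^sub>R x' = (1 / (1 + t)) *\<^sub>R ((1 + t) *\<^sub>R x) - (1 / (1 + t)) *\<^sub>R (t *\<^sub>R w)"
    by (simp add: s1 x'e scaleR_right_diff_distrib)
  also have "\<dots> = x - s *\<^sub>R w" using t1 by (simp add: s_def)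
  finally have eq: "(1 - s) *\<^sub>R x' + s *\<^sub>R w = x" by simp
  have "x' \<noteq> w"
  proof
    assume "x' = w"
    then have "x = w" using eq by (simp add: scaleR_add_left[symmetric])
    then show False using w by simp
  qed
  then have "c ((1 - s) *\<^sub>R x' + s *\<^sub>R w) y < max (c x' y) (c w y)" using c_ii s by blast
  then have "c x y < max (c x' y) (c w y)" using eq by simp
  then show ?thesis using w by (simp add: x'_def max_def split: if_splits)
qed

lemma qc_le:
  fixes c :: "'a::real_vector \<Rightarrow> 'b \<Rightarrow> real"
  assumes c_ii: "\<And>y x xb t. x \<noteq> xb \<Longrightarrow> 0 < t \<Longrightarrow> t < 1 \<Longrightarrow>
                 c ((1 - t) *\<^sub>R x + t *\<^sub>R xb) y < max (c x y) (c xb y)"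
    and s: "0 \<le> s" "s \<le> 1"
  shows "c (x + s *\<^sub>R (z - x)) y \<le> max (c x y) (c z y)"
proof -
  have eq: "x + s *\<^sub>R (z - x) = (1 - s) *\<^sub>R x + s *\<^sub>R z" by (simp add: algebra_simps)
  show ?thesis
  proof (cases "x = z \<or> s = 0 \<or> s = 1")
    case True
    then show ?thesis by auto
  next
    case False
    then have "s > 0" "s < 1" "x \<noteq> z" using s by auto
    then show ?thesis using c_ii[of x z s y] eq by simp
  qed
qed

lemma dir_deriv:
  fixes g :: "'a::euclidean_space \<Rightarrow> real"
  assumes "(g has_derivative (\<lambda>h. G \<bullet> h)) (at x)"
  shows "((\<lambda>s. g (x + s *\<^sub>R v)) has_real_derivative (G \<bullet> v)) (at 0)"
proof -
  have f: "((\<lambda>s::real. x + s *\<^sub>R v) has_derivative (\<lambda>s. s *\<^sub>R v)) (at 0)"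
    by (auto intro!: derivative_eq_intros)
  have g0: "(g has_derivative (\<lambda>h. G \<bullet> h)) (at (x + 0 *\<^sub>R v))" using assms by simp
  have "((\<lambda>s. g (x + s *\<^sub>R v)) has_derivative (\<lambda>s. G \<bullet> (s *\<^sub>R v))) (at 0)"
    using has_derivative_compose[OF f g0] by simp
  moreover have "(\<lambda>s. G \<bullet> (s *\<^sub>R v)) = (*) (G \<bullet> v)" by (auto simp: mult.commute)
  ultimately show ?thesis by (simp add: has_field_derivative_def)
qed

lemma half_cancel: fixes N e :: real assumes "N \<noteq> 0" shows "e / (2 * N) * N = e / 2"
  using assms by (simp add: field_simps)

lemma div_cancel: fixes N e :: real assumes "N \<noteq> 0" shows "e / N * N = e"
  using assms by (simp add: field_simps)

lemma norm_p1: "norm (h::'a::real_normed_vector) + 1 \<noteq> 0"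
proof -
  have "norm h + 1 > 0" by (rule add_nonneg_pos) simp_all
  then show ?thesis by linarith
qed

lemma normal_lemma:
  fixes c :: "'a::euclidean_space \<Rightarrow> 'a \<Rightarrow> real"
  assumes cc: "continuous_on UNIV (\<lambda>z. c z y)"
    and c_ii: "\<And>y x xb t. x \<noteq> xb \<Longrightarrow> 0 < t \<Longrightarrow> t < 1 \<Longrightarrow>
                 c ((1 - t) *\<^sub>R x + t *\<^sub>R xb) y < max (c x y) (c xb y)"
    and C1: "C1_boundary {z. c z y \<le> lam}"
    and lam: "lam > 0" and cx: "c x y = lam"
    and z0: "c z0 y < lam"
  shows "norm (outer_normal {z. c z y \<le> lam} x) = 1 \<and>
    (\<forall>v. v \<bullet> outer_normal {z. c z y \<le> lam} x < 0 \<longrightarrow> (\<exists>s>0. c (x + s *\<^sub>R v) y < lam))"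
proof -
  define C where "C = {z. c z y \<le> lam}"
  have Ccl: "closed C" unfolding C_def by (rule closed_Collect_le[OF cc continuous_on_const])
  have xC: "x \<in> C" using cx by (simp add: C_def)
  have out: "x + s *\<^sub>R (x - z0) \<notin> C" if "s > 0" for s
  proof -
    have "c x y < c (x + s *\<^sub>R (x - z0)) y"
      by (rule qc_ext[where c=c, OF c_ii]) (use z0 cx that in auto)
    then show ?thesis using cx by (simp add: C_def)
  qed
  have xf: "x \<in> frontier C"
  proof -
    have "x \<notin> interior C"
    proof
      assume "x \<in> interior C"
      then obtain e where e: "e > 0" "ball x e \<subseteq> C" using mem_interior by blast
      define s where "s = e / (2 * (norm (x - z0) + 1))"
      have s: "s > 0" using e by (simp add: s_def add_nonneg_pos)
      have "s * norm (x - z0) < e"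
      proof -
        have "s * norm (x - z0) \<le> s * (norm (x - z0) + 1)" using s by simp
        also have "\<dots> = e / 2" unfolding s_def by (rule half_cancel[OF norm_p1])
        finally show ?thesis using e by simp
      qed
      then have "x + s *\<^sub>R (x - z0) \<in> ball x e" using s by (simp add: dist_norm)
      then show False using e out[OF s] by blast
    qed
    then show ?thesis using xC closure_subset by (auto simp: frontier_def)
  qed
  obtain U g G where U: "open U" "x \<in> U"
    and hd: "\<And>z. z \<in> U \<Longrightarrow> (g has_derivative (\<lambda>h. G z \<bullet> h)) (at z)"
    and G0: "G x \<noteq> 0" and CU: "C \<inter> U = {z \<in> U. g z \<le> (0::real)}"
  proof -
    have "\<forall>p \<in> frontier C. \<exists>U g G. open U \<and> p \<in> U \<and>
      (\<forall>z\<in>U. (g has_derivative (\<lambda>h. G z \<bullet> h)) (at z)) \<and> continuous_on U G \<and> G p \<noteq> 0 \<and>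
      C \<inter> U = {z \<in> U. g z \<le> (0::real)}" using C1 unfolding C1_boundary_def C_def .
    then have "\<exists>U g G. open U \<and> x \<in> U \<and>
      (\<forall>z\<in>U. (g has_derivative (\<lambda>h. G z \<bullet> h)) (at z)) \<and> continuous_on U G \<and> G x \<noteq> 0 \<and>
      C \<inter> U = {z \<in> U. g z \<le> (0::real)}" using xf by (rule bspec)
    then show ?thesis using that by blast
  qed
  have CUiff: "z \<in> C \<longleftrightarrow> g z \<le> 0" if "z \<in> U" for z
  proof -
    from CU have "z \<in> C \<inter> U \<longleftrightarrow> z \<in> {z \<in> U. g z \<le> 0}" by simp
    then show ?thesis using that by simp
  qed
  have hdx: "(g has_derivative (\<lambda>h. G x \<bullet> h)) (at x)" using hd U(2) by blast
  obtain e where e: "e > 0" "ball x e \<subseteq> U" using U openE by blast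
  have inU: "x + s *\<^sub>R h \<in> U" if "0 \<le> s" "s * norm h < e" for s h
  proof -
    have "dist x (x + s *\<^sub>R h) = s * norm h" using that(1) by (simp add: dist_norm)
    then show ?thesis using that e by auto
  qed
  have small: "\<exists>s'. 0 < s' \<and> s' < d \<and> s' * norm h < e \<and> s' \<le> 1" if "d > 0" for d h
  proof -
    define s' where "s' = min (d/2) (min (1/2) (e / (2 * (norm h + 1))))"
    have p1: "0 < e / (2 * (norm h + 1))" using e by (simp add: add_nonneg_pos)
    have s'p: "s' > 0" using that p1 by (simp add: s'_def)
    have "s' * norm h \<le> s' * (norm h + 1)" using s'p by simp
    also have "\<dots> \<le> (e / (2 * (norm h + 1))) * (norm h + 1)"
      by (intro mult_right_mono) (auto simp: s'_def)
    also have "\<dots> = e / 2" by (rule half_cancel[OF norm_p1])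
    finally have "s' * norm h < e" using e by simp
    moreover have "s' < d" "s' \<le> 1" using that by (auto simp: s'_def)
    ultimately show ?thesis using s'p by blast
  qed
  have gxle: "g x \<le> 0" using xC U(2) CUiff by simp
  have gx: "g x = 0"
  proof (rule ccontr)
    assume "g x \<noteq> 0"
    then have neg: "g x < 0" using gxle by simp
    let ?\<phi> = "\<lambda>s. g (x + s *\<^sub>R (x - z0))"
    have "isCont ?\<phi> 0" by (rule DERIV_isCont[OF dir_deriv[OF hdx]])
    then have "(?\<phi> \<longlongrightarrow> ?\<phi> 0) (at 0)" by (simp add: isCont_def)
    moreover have "?\<phi> 0 < 0" using neg by simp
    ultimately have "eventually (\<lambda>s. ?\<phi> s < 0) (at 0)" by (rule order_tendstoD(2))
    then obtain d where d: "d > 0" and hd': "\<And>s. s \<noteq> 0 \<Longrightarrow> dist s 0 < d \<Longrightarrow> ?\<phi> s < 0"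
      unfolding eventually_at by auto
    obtain s where s: "0 < s" "s < d" "s * norm (x - z0) < e" using small[OF d] by blast
    have "?\<phi> s < 0" using hd' s by simp
    moreover have "x + s *\<^sub>R (x - z0) \<in> U" using inU s by simp
    ultimately have "x + s *\<^sub>R (x - z0) \<in> C" using CUiff by simp
    then show False using out s by blast
  qed
  have key_neg: "\<exists>d>0. \<forall>s. 0 < s \<longrightarrow> s < d \<longrightarrow> x + s *\<^sub>R h \<in> C" if hneg: "G x \<bullet> h < 0" for h
  proof -
    obtain d where d: "d > 0" and hd': "\<And>s. s > 0 \<Longrightarrow> s < d \<Longrightarrow> g (x + (0 + s) *\<^sub>R h) < g (x + 0 *\<^sub>R h)"
      using DERIV_neg_dec_right[OF dir_deriv[OF hdx] hneg] by blast
    define d' where "d' = min d (e / (norm h + 1))"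
    have d'p: "d' > 0" using d e by (simp add: d'_def add_nonneg_pos)
    have "x + s *\<^sub>R h \<in> C" if "0 < s" "s < d'" for s
    proof -
      have "g (x + s *\<^sub>R h) < 0" using hd'[of s] that gx by (simp add: d'_def)
      moreover have "s * norm h < e"
      proof -
        have "s * norm h \<le> s * (norm h + 1)" using that by simp
        also have "\<dots> < (e / (norm h + 1)) * (norm h + 1)"
          using that by (intro mult_strict_right_mono) (auto simp: d'_def add_nonneg_pos)
        also have "\<dots> = e" by (rule div_cancel[OF norm_p1])
        finally show ?thesis .
      qed
      then have "x + s *\<^sub>R h \<in> U" using inU that by simp
      ultimately show ?thesis using CUiff by simp
    qed
    then show ?thesis using d'p by blast
  qed
  have key_pos: "\<exists>d>0. \<forall>s. 0 < s \<longrightarrow> s < d \<longrightarrow> g (x + s *\<^sub>R h) > 0" if hpos: "G x \<bullet> h > 0" for h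
  proof -
    obtain d where d: "d > 0" and hd': "\<And>s. s > 0 \<Longrightarrow> s < d \<Longrightarrow> g (x + 0 *\<^sub>R h) < g (x + (0 + s) *\<^sub>R h)"
      using DERIV_pos_inc_right[OF dir_deriv[OF hdx] hpos] by blast
    then show ?thesis using gx by (intro exI[of _ d]) auto
  qed
  define u where "u = G x /\<^sub>R norm (G x)"
  have nu: "norm u = 1" using G0 by (simp add: u_def)
  have Gu: "G x \<bullet> h = norm (G x) * (u \<bullet> h)" for h using G0 by (simp add: u_def)
  have nG: "norm (G x) > 0" using G0 by simp
  have sup_u: "\<forall>z\<in>C. u \<bullet> (z - x) \<le> 0"
  proof (intro ballI)
    fix z assume zC: "z \<in> C"
    show "u \<bullet> (z - x) \<le> 0"
    proof (rule ccontr)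
      assume "\<not> u \<bullet> (z - x) \<le> 0"
      then have "G x \<bullet> (z - x) > 0" using Gu nG by simp
      then obtain d where d: "d > 0" and hp: "\<And>s. 0 < s \<Longrightarrow> s < d \<Longrightarrow> g (x + s *\<^sub>R (z - x)) > 0"
        using key_pos by blast
      obtain s where s: "0 < s" "s < d" "s * norm (z - x) < e" "s \<le> 1" using small[OF d] by blast
      have "c (x + s *\<^sub>R (z - x)) y \<le> max (c x y) (c z y)"
        by (rule qc_le[where c=c, OF c_ii]) (use s in auto)
      then have "x + s *\<^sub>R (z - x) \<in> C" using zC cx by (simp add: C_def)
      moreover have "x + s *\<^sub>R (z - x) \<in> U" using inU s by simp
      ultimately have "g (x + s *\<^sub>R (z - x)) \<le> 0" using CUiff by simp
      then show False using hp[OF s(1,2)] by linarith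
    qed
  qed
  have uniq: "n = u" if n1: "norm n = 1" and ns: "\<forall>z\<in>C. n \<bullet> (z - x) \<le> 0" for n
  proof (rule ccontr)
    assume nu': "n \<noteq> u"
    have "n \<bullet> u < 1" by (rule unit_inner_lt1[OF n1 nu nu'])
    define h where "h = n - u"
    have uh: "u \<bullet> h = u \<bullet> n - 1" using nu by (simp add: h_def inner_diff_right power2_norm_eq_inner[symmetric])
    have nh: "n \<bullet> h = 1 - n \<bullet> u" using n1 by (simp add: h_def inner_diff_right power2_norm_eq_inner[symmetric])
    have "u \<bullet> n < 1" using \<open>n \<bullet> u < 1\<close> by (simp add: inner_commute)
    then have "G x \<bullet> h < 0" using Gu uh nG by (simp add: mult_pos_neg)
    then obtain d where d: "d > 0" and hC: "\<And>s. 0 < s \<Longrightarrow> s < d \<Longrightarrow> x + s *\<^sub>R h \<in> C"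
      using key_neg by blast
    have "x + (d/2) *\<^sub>R h \<in> C" using hC d by simp
    then have "n \<bullet> ((x + (d/2) *\<^sub>R h) - x) \<le> 0" using ns by blast
    then have "n \<bullet> ((d/2) *\<^sub>R h) \<le> 0" by simp
    then have "(d/2) * (n \<bullet> h) \<le> 0" by simp
    then have "n \<bullet> h \<le> 0" using d by (simp add: mult_le_0_iff)
    then show False using nh \<open>n \<bullet> u < 1\<close> by simp
  qed
  have on: "outer_normal C x = u"
    unfolding outer_normal_def
  proof (rule the_equality)
    show "norm u = 1 \<and> (\<forall>z\<in>C. u \<bullet> (z - x) \<le> 0)" using nu sup_u by blast
  next
    fix n assume "norm n = 1 \<and> (\<forall>z\<in>C. n \<bullet> (z - x) \<le> 0)"
    then show "n = u" using uniq by blast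
  qed
  have res: "\<exists>s>0. c (x + s *\<^sub>R v) y < lam" if "v \<bullet> u < 0" for v
  proof -
    have "G x \<bullet> v < 0" using Gu nG that by (simp add: inner_commute mult_pos_neg)
    then obtain d where d: "d > 0" and hC: "\<And>s. 0 < s \<Longrightarrow> s < d \<Longrightarrow> x + s *\<^sub>R v \<in> C"
      using key_neg by blast
    have v0: "v \<noteq> 0" using that by auto
    have inC: "x + (d/2) *\<^sub>R v \<in> C" using hC d by simp
    have ne: "x \<noteq> x + (d/2) *\<^sub>R v" using v0 d by simp
    have "c ((1 - 1/2) *\<^sub>R x + (1/2) *\<^sub>R (x + (d/2) *\<^sub>R v)) y < max (c x y) (c (x + (d/2) *\<^sub>R v) y)"
      by (rule c_ii[OF ne]) auto
    moreover have "(1 - 1/2) *\<^sub>R x + (1/2) *\<^sub>R (x + (d/2) *\<^sub>R v) = x + (d/4) *\<^sub>R v"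
    proof -
      have "(1 - 1/2) *\<^sub>R x + (1/2) *\<^sub>R x = x" by (simp add: scaleR_add_left[symmetric])
      then show ?thesis by (simp add: algebra_simps)
    qed
    ultimately have "c (x + (d/4) *\<^sub>R v) y < lam" using inC cx by (simp add: C_def)
    then show ?thesis using d by (intro exI[of _ "d/4"]) simp
  qed
  show ?thesis using on nu res by (simp add: C_def)
qed

lemma cont_pt:
  fixes c :: "'a::metric_space \<Rightarrow> 'b::metric_space \<Rightarrow> real"
  assumes c_cont: "continuous_on UNIV (\<lambda>(x, y). c x y)" and e: "e > 0"
  shows "\<exists>d>0. \<forall>a' b'. dist a' a < d \<longrightarrow> dist b' b < d \<longrightarrow> \<bar>c a' b' - c a b\<bar> < e"
proof -
  have "continuous (at (a, b)) (\<lambda>(x, y). c x y)"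
    using c_cont continuous_on_eq_continuous_at open_UNIV by blast
  then obtain d where d: "d > 0"
    and hd: "\<And>p. dist p (a, b) < d \<Longrightarrow> dist ((\<lambda>(x, y). c x y) p) ((\<lambda>(x, y). c x y) (a, b)) < e"
    unfolding continuous_at_eps_delta using e by blast
  show ?thesis
  proof (intro exI[of _ "d/2"] conjI allI impI)
    fix a' b' assume h: "dist a' a < d/2" "dist b' b < d/2"
    have "dist (a', b') (a, b) = sqrt ((dist a' a)^2 + (dist b' b)^2)" by (rule dist_Pair_Pair)
    also have "\<dots> \<le> dist a' a + dist b' b" by (rule sqrt_sum_squares_le_sum) simp_all
    also have "\<dots> < d" using h by simp
    finally have "dist ((\<lambda>(x, y). c x y) (a', b')) ((\<lambda>(x, y). c x y) (a, b)) < e" by (rule hd)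
    then show "\<bar>c a' b' - c a b\<bar> < e" by (simp add: dist_real_def)
  qed (use d in simp)
qed

lemma lemZ:
  fixes c :: "'a::euclidean_space \<Rightarrow> 'a \<Rightarrow> real"
  assumes c_cont: "continuous_on UNIV (\<lambda>(x, y). c x y)"
    and c_ii: "\<And>y x xb t. x \<noteq> xb \<Longrightarrow> 0 < t \<Longrightarrow> t < 1 \<Longrightarrow>
                 c ((1 - t) *\<^sub>R x + t *\<^sub>R xb) y < max (c x y) (c xb y)"
    and z0: "c z0 y < c x y"
  shows "\<exists>\<delta>>0. \<forall>q\<in>ball z0 \<delta>. \<forall>t::real. 0 < t \<longrightarrow> t \<le> 1 \<longrightarrow> c (x + t *\<^sub>R (q - x)) y < c x y"
proof -
  obtain d where d: "d > 0" and hd: "\<And>a' b'. dist a' z0 < d \<Longrightarrow> dist b' y < d \<Longrightarrow> \<bar>c a' b' - c z0 y\<bar> < c x y - c z0 y"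
    using cont_pt[OF c_cont, of "c x y - c z0 y" z0 y] z0 by auto
  have "\<forall>q\<in>ball z0 d. \<forall>t::real. 0 < t \<longrightarrow> t \<le> 1 \<longrightarrow> c (x + t *\<^sub>R (q - x)) y < c x y"
  proof (intro ballI allI impI)
    fix q and t :: real assume q: "q \<in> ball z0 d" and t: "0 < t" "t \<le> 1"
    have "dist q z0 < d" using q by (simp add: dist_commute)
    then have cq: "c q y < c x y" using hd[of q y] d unfolding abs_less_iff by simp
    show "c (x + t *\<^sub>R (q - x)) y < c x y"
    proof (cases "t = 1")
      case True
      then show ?thesis using cq by simp
    next
      case False
      then have t1: "t < 1" using t by simp
      have qx: "x \<noteq> q" using cq by auto
      have "c ((1 - t) *\<^sub>R x + t *\<^sub>R q) y < max (c x y) (c q y)" by (rule c_ii[OF qx t(1) t1])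
      moreover have "(1 - t) *\<^sub>R x + t *\<^sub>R q = x + t *\<^sub>R (q - x)" by (simp add: algebra_simps)
      ultimately show ?thesis using cq by simp
    qed
  qed
  then show ?thesis using d by blast
qed

lemma lemW:
  fixes c :: "'a::euclidean_space \<Rightarrow> 'a \<Rightarrow> real"
  assumes c_cont: "continuous_on UNIV (\<lambda>(x, y). c x y)"
    and c_ii: "\<And>y x xb t. x \<noteq> xb \<Longrightarrow> 0 < t \<Longrightarrow> t < 1 \<Longrightarrow>
                 c ((1 - t) *\<^sub>R x + t *\<^sub>R xb) y < max (c x y) (c xb y)"
    and w0: "c (x - (p - x)) yt < c x yt"
  shows "\<exists>\<delta>>0. \<exists>r>0. \<forall>q\<in>ball p \<delta>. \<forall>y'\<in>ball yt r. \<forall>t::real. 0 < t \<longrightarrow> c x y' < c (x + t *\<^sub>R (q - x)) y'"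
proof -
  define w0 where "w0 = x - (p - x)"
  define \<eta> where "\<eta> = c x yt - c w0 yt"
  have \<eta>: "\<eta> > 0" using w0 by (simp add: \<eta>_def w0_def)
  obtain d1 where d1: "d1 > 0" and h1: "\<And>a' b'. dist a' w0 < d1 \<Longrightarrow> dist b' yt < d1 \<Longrightarrow> \<bar>c a' b' - c w0 yt\<bar> < \<eta>/2"
    using cont_pt[OF c_cont, of "\<eta>/2" w0 yt] \<eta> by auto
  obtain d2 where d2: "d2 > 0" and h2: "\<And>a' b'. dist a' x < d2 \<Longrightarrow> dist b' yt < d2 \<Longrightarrow> \<bar>c a' b' - c x yt\<bar> < \<eta>/2"
    using cont_pt[OF c_cont, of "\<eta>/2" x yt] \<eta> by auto
  define r where "r = min d1 d2"
  have r: "r > 0" using d1 d2 by (simp add: r_def)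
  have "\<forall>q\<in>ball p d1. \<forall>y'\<in>ball yt r. \<forall>t::real. 0 < t \<longrightarrow> c x y' < c (x + t *\<^sub>R (q - x)) y'"
  proof (intro ballI allI impI)
    fix q y' and t :: real assume q: "q \<in> ball p d1" and y': "y' \<in> ball yt r" and t: "0 < t"
    define w where "w = x - (q - x)"
    have "w0 - w = q - p" by (simp add: w0_def w_def algebra_simps)
    then have "dist w w0 = dist p q" by (simp add: dist_norm norm_minus_commute)
    then have dw: "dist w w0 < d1" using q by simp
    have dy: "dist y' yt < d1" "dist y' yt < d2" using y' by (auto simp: r_def dist_commute)
    have "c w y' < c w0 yt + \<eta>/2" using h1[OF dw dy(1)] unfolding abs_less_iff by linarith
    moreover have "c x y' > c x yt - \<eta>/2" using h2[of x y'] dy(2) d2 unfolding abs_less_iff by simp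
    ultimately have cw: "c w y' < c x y'" using \<eta>_def by linarith
    have "c x y' < c (x + t *\<^sub>R (x - w)) y'" by (rule qc_ext[where c=c, OF c_ii cw t])
    moreover have "x - w = q - x" by (simp add: w_def)
    ultimately show "c x y' < c (x + t *\<^sub>R (q - x)) y'" by simp
  qed
  then show ?thesis using d1 r by blast
qed

lemma inf_small:
  fixes c :: "'a \<Rightarrow> 'b \<Rightarrow> real"
  assumes c_i2: "(INF x. c x y) = 0" and e: "e > 0"
  shows "\<exists>z. c z y < e"
proof -
  have "Inf (range (\<lambda>x. c x y)) < e" using c_i2 e by simp
  then show ?thesis using cInf_lessD[of "range (\<lambda>x. c x y)" e] by auto
qed

lemma geo:
  fixes c :: "'a::euclidean_space \<Rightarrow> 'a \<Rightarrow> real" and x y yt :: 'a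
  assumes c_nonneg: "\<And>x y. c x y \<ge> 0"
    and c_cont: "continuous_on UNIV (\<lambda>(x, y). c x y)"
    and c_i1: "\<And>x. \<exists>!y. c x y = 0"
    and c_i2: "\<And>y. (INF x. c x y) = 0"
    and c_ii: "\<And>y x xb t. x \<noteq> xb \<Longrightarrow> 0 < t \<Longrightarrow> t < 1 \<Longrightarrow>
                 c ((1 - t) *\<^sub>R x + t *\<^sub>R xb) y < max (c x y) (c xb y)"
    and c_iii: "\<And>lam y. lam > 0 \<Longrightarrow> C1_boundary {z. c z y \<le> lam}"
    and c_iv: "\<And>x y yb lam. lam > 0 \<Longrightarrow> c x y = lam \<Longrightarrow> c x yb = lam \<Longrightarrow>
                 outer_normal {z. c z y \<le> lam} x = outer_normal {z. c z yb \<le> lam} x \<Longrightarrow> y = yb"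
    and yne: "y \<noteq> yt"
  shows "\<exists>p \<delta> r \<tau>. \<delta> > 0 \<and> r > 0 \<and> \<tau> > 0 \<and> (\<forall>t q y'. 0 < t \<longrightarrow> t \<le> \<tau> \<longrightarrow> q \<in> ball p \<delta> \<longrightarrow> y' \<in> ball yt r \<longrightarrow>
      max (c (x + t *\<^sub>R (q - x)) y) (c x y') < max (c x y) (c (x + t *\<^sub>R (q - x)) y'))"
proof -
  define a where "a = c x y"
  define b where "b = c x yt"
  have a0: "a \<ge> 0" and b0: "b \<ge> 0" using c_nonneg by (simp_all add: a_def b_def)
  consider "b < a" | "a < b" | "a = b" by linarith
  then show ?thesis
  proof cases
    case 1
    then have apos: "a > 0" using b0 by simp
    obtain z0 where z0: "c z0 y < c x y" using inf_small[of c y a, OF c_i2[of y] apos] by (auto simp: a_def)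
    obtain \<delta> where \<delta>: "\<delta> > 0" and hZ: "\<forall>q\<in>ball z0 \<delta>. \<forall>t::real. 0 < t \<longrightarrow> t \<le> 1 \<longrightarrow> c (x + t *\<^sub>R (q - x)) y < c x y"
      using lemZ[OF c_cont c_ii z0] by blast
    obtain d where d: "d > 0" and hd: "\<And>a' b'. dist a' x < d \<Longrightarrow> dist b' yt < d \<Longrightarrow> \<bar>c a' b' - c x yt\<bar> < a - b"
      using cont_pt[OF c_cont, of "a - b" x yt] 1 by (auto simp: b_def)
    have main: "\<forall>t q y'. 0 < t \<longrightarrow> t \<le> (1::real) \<longrightarrow> q \<in> ball z0 (\<delta>) \<longrightarrow> y' \<in> ball yt (d) \<longrightarrow>
      max (c (x + t *\<^sub>R (q - x)) y) (c x y') < max (c x y) (c (x + t *\<^sub>R (q - x)) y')"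
    proof (intro allI impI)
      fix t :: real and q y' assume t: "0 < t" "t \<le> 1" and q: "q \<in> ball z0 \<delta>" and y': "y' \<in> ball yt d"
      have h1: "c (x + t *\<^sub>R (q - x)) y < a" using hZ q t by (simp add: a_def)
      have "dist y' yt < d" using y' by (simp add: dist_commute)
      then have "\<bar>c x y' - c x yt\<bar> < a - b" using hd[of x y'] d by simp
      then have "c x yt - (a - b) < c x y'" "c x y' < c x yt + (a - b)" by (simp_all add: abs_diff_less_iff)
      then have h2: "c x y' < a" using b_def by linarith
      show "max (c (x + t *\<^sub>R (q - x)) y) (c x y') < max (c x y) (c (x + t *\<^sub>R (q - x)) y')"
        using h1 h2 by (simp add: a_def max_less_iff_conj less_max_iff_disj)
    qed
    have pos: "\<delta> > 0" "d > 0" "(1::real) > 0" using \<delta> d by auto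
    show ?thesis using main pos by blast

  next
    case 2
    then have bpos: "b > 0" using a0 by simp
    obtain w0 where w0: "c w0 yt < c x yt" using inf_small[of c yt b, OF c_i2[of yt] bpos] by (auto simp: b_def)
    define p where "p = x - (w0 - x)"
    have pw: "x - (p - x) = w0" by (simp add: p_def)
    obtain \<delta> r1 where \<delta>: "\<delta> > 0" and r1: "r1 > 0" and hW: "\<forall>q\<in>ball p \<delta>. \<forall>y'\<in>ball yt r1. \<forall>t::real. 0 < t \<longrightarrow> c x y' < c (x + t *\<^sub>R (q - x)) y'"
      using lemW[OF c_cont c_ii, of x p yt] w0 pw by auto
    define e where "e = (b - a) / 2"
    have e: "e > 0" using 2 by (simp add: e_def)
    obtain d3 where d3: "d3 > 0" and h3: "\<And>a' b'. dist a' x < d3 \<Longrightarrow> dist b' y < d3 \<Longrightarrow> \<bar>c a' b' - c x y\<bar> < e"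
      using cont_pt[OF c_cont e, of x y] by auto
    obtain d4 where d4: "d4 > 0" and h4: "\<And>a' b'. dist a' x < d4 \<Longrightarrow> dist b' yt < d4 \<Longrightarrow> \<bar>c a' b' - c x yt\<bar> < e"
      using cont_pt[OF c_cont e, of x yt] by auto
    define D where "D = min d3 d4"
    have D: "D > 0" using d3 d4 by (simp add: D_def)
    define L where "L = norm (p - x) + \<delta>"
    have L: "L > 0" using \<delta> by (simp add: L_def add_nonneg_pos)
    define \<tau> where "\<tau> = D / (2 * L)"
    have \<tau>: "\<tau> > 0" using D L by (simp add: \<tau>_def)
    have \<tau>L: "\<tau> * L = D / 2" using L by (simp add: \<tau>_def)
    have main: "\<forall>t q y'. 0 < t \<longrightarrow> t \<le> \<tau> \<longrightarrow> q \<in> ball p (\<delta>) \<longrightarrow> y' \<in> ball yt (min r1 d4) \<longrightarrow>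
      max (c (x + t *\<^sub>R (q - x)) y) (c x y') < max (c x y) (c (x + t *\<^sub>R (q - x)) y')"
    proof (intro allI impI)
      fix t :: real and q y' assume t: "0 < t" "t \<le> \<tau>" and q: "q \<in> ball p \<delta>" and y': "y' \<in> ball yt (min r1 d4)"
      define x' where "x' = x + t *\<^sub>R (q - x)"
      have "norm (q - x) \<le> norm (q - p) + norm (p - x)" using norm_triangle_ineq[of "q - p" "p - x"] by simp
      also have "\<dots> < L" using q by (simp add: L_def dist_norm norm_minus_commute)
      finally have nq: "norm (q - x) < L" .
      have "dist x' x = t * norm (q - x)" using t by (simp add: x'_def dist_norm)
      also have "\<dots> \<le> t * L" using nq t by simp
      also have "\<dots> \<le> \<tau> * L" using t L by simp
      also have "\<dots> < D" using \<tau>L D by simp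
      finally have dx: "dist x' x < d3" "dist x' x < d4" by (auto simp: D_def)
      have dy: "dist y' yt < d4" "y' \<in> ball yt r1" using y' by (auto simp: dist_commute)
      have u1: "\<bar>c x' y - c x y\<bar> < e" using h3[OF dx(1)] d3 by simp
      have u2: "\<bar>c x' y' - c x yt\<bar> < e" using h4[OF dx(2) dy(1)] .
      have v1: "c x' y < c x y + e" using u1 by (simp add: abs_diff_less_iff)
      have v2: "c x yt - e < c x' y'" using u2 by (simp add: abs_diff_less_iff)
      have ee: "c x y + e = c x yt - e" using e_def a_def b_def by (simp add: field_simps)
      have h1: "c x' y < c x' y'" using v1 v2 ee by linarith
      have h2: "c x y' < c x' y'" using hW q dy(2) t unfolding x'_def by blast
      show "max (c (x + t *\<^sub>R (q - x)) y) (c x y') < max (c x y) (c (x + t *\<^sub>R (q - x)) y')"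
        using h1 h2 unfolding x'_def by (simp add: max_less_iff_conj less_max_iff_disj)
    qed
    have pos: "\<delta> > 0" "min r1 d4 > 0" "(\<tau>::real) > 0" using \<delta> r1 d4 \<tau> by auto
    show ?thesis using main pos by blast

  next
    case 3
    define lam where "lam = a"
    have cx: "c x y = lam" and cxt: "c x yt = lam" using 3 by (simp_all add: lam_def a_def b_def)
    have lam: "lam > 0"
    proof (rule ccontr)
      assume "\<not> lam > 0"
      then have "lam = 0" using a0 by (simp add: lam_def)
      then have "y = yt" using c_i1[of x] cx cxt by blast
      then show False using yne by simp
    qed
    obtain z0 where z0: "c z0 y < lam" using inf_small[of c y lam, OF c_i2[of y] lam] by blast
    obtain z1 where z1: "c z1 yt < lam" using inf_small[of c yt lam, OF c_i2[of yt] lam] by blast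
    have ccy: "continuous_on UNIV (\<lambda>z. c z w)" for w
    proof -
      have "continuous_on UNIV (\<lambda>z. (\<lambda>(x, y). c x y) (z, w))"
        by (rule continuous_on_compose2[OF c_cont]) (auto intro!: continuous_intros)
      then show ?thesis by simp
    qed
    define n0 where "n0 = outer_normal {z. c z y \<le> lam} x"
    define n1 where "n1 = outer_normal {z. c z yt \<le> lam} x"
    have N0: "norm n0 = 1 \<and> (\<forall>v. v \<bullet> n0 < 0 \<longrightarrow> (\<exists>s>0. c (x + s *\<^sub>R v) y < lam))"
      unfolding n0_def by (rule normal_lemma[of c y lam x z0, OF ccy c_ii c_iii[OF lam] lam cx z0])
    have N1: "norm n1 = 1 \<and> (\<forall>v. v \<bullet> n1 < 0 \<longrightarrow> (\<exists>s>0. c (x + s *\<^sub>R v) yt < lam))"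
      unfolding n1_def by (rule normal_lemma[of c yt lam x z1, OF ccy c_ii c_iii[OF lam] lam cxt z1])
    have n01: "n0 \<noteq> n1"
    proof
      assume "n0 = n1"
      then have "y = yt" using c_iv[OF lam cx cxt] by (simp add: n0_def n1_def)
      then show False using yne by simp
    qed
    define v where "v = n1 - n0"
    have "n1 \<bullet> n0 < 1" using unit_inner_lt1[of n1 n0] N0 N1 n01 by auto
    have vn0: "v \<bullet> n0 < 0"
    proof -
      have "n0 \<bullet> n0 = 1" using N0 by (metis power2_norm_eq_inner power_one)
      then show ?thesis using \<open>n1 \<bullet> n0 < 1\<close> by (simp add: v_def inner_diff_left)
    qed
    have vn1: "(- v) \<bullet> n1 < 0"
    proof -
      have "n1 \<bullet> n1 = 1" using N1 by (metis power2_norm_eq_inner power_one)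
      moreover have "(- v) \<bullet> n1 = n0 \<bullet> n1 - n1 \<bullet> n1" by (simp add: v_def inner_diff_left)
      moreover have "n0 \<bullet> n1 = n1 \<bullet> n0" by (rule inner_commute)
      ultimately show ?thesis using \<open>n1 \<bullet> n0 < 1\<close> by linarith
    qed
    obtain s0 where s0: "s0 > 0" "c (x + s0 *\<^sub>R v) y < lam" using N0 vn0 by blast
    obtain s1 where s1: "s1 > 0" "c (x + s1 *\<^sub>R (- v)) yt < lam" using N1 vn1 by blast
    define s where "s = min s0 s1"
    have s: "s > 0" "s \<le> s0" "s \<le> s1" using s0 s1 by (auto simp: s_def)
    have cs0: "c (x + s *\<^sub>R v) y < lam"
    proof -
      obtain \<delta>0 where \<delta>0: "\<delta>0 > 0" and h: "\<forall>q\<in>ball (x + s0 *\<^sub>R v) \<delta>0. \<forall>t::real. 0 < t \<longrightarrow> t \<le> 1 \<longrightarrow> c (x + t *\<^sub>R (q - x)) y < c x y"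
        using lemZ[OF c_cont c_ii, of "x + s0 *\<^sub>R v" y x] s0 cx by auto
      have inb: "x + s0 *\<^sub>R v \<in> ball (x + s0 *\<^sub>R v) \<delta>0" using \<delta>0 by simp
      have t0: "0 < s/s0" using s s0 by simp
      have t1: "s/s0 \<le> 1" using s s0 by simp
      have "c (x + (s/s0) *\<^sub>R ((x + s0 *\<^sub>R v) - x)) y < c x y"
        using h inb t0 t1 by blast
      moreover have "(s/s0) *\<^sub>R ((x + s0 *\<^sub>R v) - x) = s *\<^sub>R v" using s0 by simp
      ultimately show ?thesis using cx by (simp only:)
    qed
    have cs1: "c (x + s *\<^sub>R (- v)) yt < lam"
    proof -
      obtain \<delta>0 where \<delta>0: "\<delta>0 > 0" and h: "\<forall>q\<in>ball (x + s1 *\<^sub>R (- v)) \<delta>0. \<forall>t::real. 0 < t \<longrightarrow> t \<le> 1 \<longrightarrow> c (x + t *\<^sub>R (q - x)) yt < c x yt"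
        using lemZ[OF c_cont c_ii, of "x + s1 *\<^sub>R (- v)" yt x] s1 cxt by auto
      have inb: "x + s1 *\<^sub>R (- v) \<in> ball (x + s1 *\<^sub>R (- v)) \<delta>0" using \<delta>0 by simp
      have t0: "0 < s/s1" using s s1 by simp
      have t1: "s/s1 \<le> 1" using s s1 by simp
      have "c (x + (s/s1) *\<^sub>R ((x + s1 *\<^sub>R (- v)) - x)) yt < c x yt"
        using h inb t0 t1 by blast
      moreover have "(s/s1) *\<^sub>R ((x + s1 *\<^sub>R (- v)) - x) = s *\<^sub>R (- v)" using s1 by simp
      ultimately show ?thesis using cxt by (simp only:)
    qed
    define p where "p = x + s *\<^sub>R v"
    have cp: "c p y < c x y" using cs0 cx by (simp add: p_def)
    have pw: "c (x - (p - x)) yt < c x yt" using cs1 cxt by (simp add: p_def)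
    obtain \<delta>Z where \<delta>Z: "\<delta>Z > 0" and hZ: "\<forall>q\<in>ball p \<delta>Z. \<forall>t::real. 0 < t \<longrightarrow> t \<le> 1 \<longrightarrow> c (x + t *\<^sub>R (q - x)) y < c x y"
      using lemZ[OF c_cont c_ii cp] by blast
    obtain \<delta>W r1 where \<delta>W: "\<delta>W > 0" and r1: "r1 > 0" and hW: "\<forall>q\<in>ball p \<delta>W. \<forall>y'\<in>ball yt r1. \<forall>t::real. 0 < t \<longrightarrow> c x y' < c (x + t *\<^sub>R (q - x)) y'"
      using lemW[OF c_cont c_ii pw] by blast
    have main: "\<forall>t q y'. 0 < t \<longrightarrow> t \<le> (1::real) \<longrightarrow> q \<in> ball p (min \<delta>Z \<delta>W) \<longrightarrow> y' \<in> ball yt (r1) \<longrightarrow>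
      max (c (x + t *\<^sub>R (q - x)) y) (c x y') < max (c x y) (c (x + t *\<^sub>R (q - x)) y')"
    proof (intro allI impI)
      fix t :: real and q y' assume t: "0 < t" "t \<le> 1" and q: "q \<in> ball p (min \<delta>Z \<delta>W)" and y': "y' \<in> ball yt r1"
      have qZ: "q \<in> ball p \<delta>Z" and qW: "q \<in> ball p \<delta>W" using q by auto
      have h1: "c (x + t *\<^sub>R (q - x)) y < lam" using hZ qZ t cx by auto
      have h2: "c x y' < c (x + t *\<^sub>R (q - x)) y'" using hW qW y' t by blast
      show "max (c (x + t *\<^sub>R (q - x)) y) (c x y') < max (c x y) (c (x + t *\<^sub>R (q - x)) y')"
      proof -
        have m1: "c (x + t *\<^sub>R (q - x)) y < max lam (c (x + t *\<^sub>R (q - x)) y')" using h1 by (simp add: less_max_iff_disj)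
        have m2: "c x y' < max lam (c (x + t *\<^sub>R (q - x)) y')" using h2 by (simp add: less_max_iff_disj)
        show ?thesis unfolding cx max_less_iff_conj using m1 m2 by blast
      qed
    qed
    have pos: "min \<delta>Z \<delta>W > 0" "r1 > 0" "(1::real) > 0" using \<delta>Z \<delta>W r1 by auto
    show ?thesis using main pos by blast

  qed
qed

lemma Leb_UNIV: "x \<in> Leb (UNIV :: 'a::euclidean_space set)"
proof -
  have "eventually (\<lambda>r. measure lebesgue (UNIV \<inter> ball x r) / measure lebesgue (ball x r) = 1) (at_right (0::real))"
    unfolding eventually_at_right_field
  proof (intro exI[of _ 1] conjI allI impI)
    fix r :: real assume "r > 0" "r < 1"
    then have "measure lebesgue (ball x r) > 0" using content_ball_pos by simp
    then show "measure lebesgue (UNIV \<inter> ball x r) / measure lebesgue (ball x r) = 1" by simp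
  qed simp
  then have "((\<lambda>r. measure lebesgue (UNIV \<inter> ball x r) / measure lebesgue (ball x r)) \<longlongrightarrow> 1) (at_right 0)"
    by (subst tendsto_cong[OF \<open>eventually _ _\<close>]) (rule tendsto_const)
  then show ?thesis by (simp add: Leb_def)
qed

theorem theorem2p17:
  fixes \<mu> \<nu> :: "'a::euclidean_space measure"
    and c :: "'a \<Rightarrow> 'a \<Rightarrow> real"
    and \<gamma> :: "('a \<times> 'a) measure"
    and x yt :: 'a
  assumes mu: "borel_prob \<mu>" and nu: "borel_prob \<nu>"
    and cpt_mu: "compact (msupp \<mu>)" and cpt_nu: "compact (msupp \<nu>)"
    and ac: "absolutely_continuous lborel \<mu>"
    and c_nonneg: "\<And>x y. c x y \<ge> 0"
    and c_cont: "continuous_on UNIV (\<lambda>(x, y). c x y)"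
    and c_i1: "\<And>x. \<exists>!y. c x y = 0"
    and c_i2: "\<And>y. (INF x. c x y) = 0"
    and c_ii: "\<And>y x xb t. x \<noteq> xb \<Longrightarrow> 0 < t \<Longrightarrow> t < 1 \<Longrightarrow>
                 c ((1 - t) *\<^sub>R x + t *\<^sub>R xb) y < max (c x y) (c xb y)"
    and c_iii: "\<And>lam y. lam > 0 \<Longrightarrow> C1_boundary {z. c z y \<le> lam}"
    and c_iv: "\<And>x y yb lam. lam > 0 \<Longrightarrow> c x y = lam \<Longrightarrow> c x yb = lam \<Longrightarrow>
                 outer_normal {z. c z y \<le> lam} x = outer_normal {z. c z yb \<le> lam} x \<Longrightarrow> y = yb"
    and gam: "\<gamma> \<in> couplings \<mu> \<nu>"
    and reg: "(x, yt) \<in> regular_pts \<gamma>"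
  shows "(\<forall>y. y \<noteq> yt \<longrightarrow> (\<exists>(x', y') \<in> regular_pts \<gamma>.
            max (c x' y) (c x y') < max (c x y) (c x' y'))) \<and>
         (\<forall>A \<in> sets borel. x \<in> Leb A \<longrightarrow> (\<forall>y. y \<noteq> yt \<longrightarrow> (\<exists>(x', y') \<in> regular_pts \<gamma>.
            x' \<in> A \<and> max (c x' y) (c x y') < max (c x y) (c x' y'))))"
proof -
  have sg: "sets \<gamma> = sets borel" using gam by (simp add: couplings_def borel_prob_def)
  have main: "\<exists>(x', y') \<in> regular_pts \<gamma>. x' \<in> A \<and> max (c x' y) (c x y') < max (c x y) (c x' y')"
    if A: "A \<in> sets lebesgue" and xA: "x \<in> Leb A" and yne: "y \<noteq> yt" for A y
  proof -
    have G: "\<exists>p \<delta> r \<tau>. \<delta> > 0 \<and> r > 0 \<and> \<tau> > 0 \<and> (\<forall>t q y'. 0 < t \<longrightarrow> t \<le> \<tau> \<longrightarrow> q \<in> ball p \<delta> \<longrightarrow> y' \<in> ball yt r \<longrightarrow>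
        max (c (x + t *\<^sub>R (q - x)) y) (c x y') < max (c x y) (c (x + t *\<^sub>R (q - x)) y'))"
      by (rule geo[of c y yt x, OF c_nonneg c_cont c_i1 c_i2 c_ii c_iii c_iv yne])
    then obtain p \<delta> r \<tau> where H: "\<delta> > 0 \<and> r > 0 \<and> \<tau> > 0 \<and> (\<forall>t q y'. 0 < t \<longrightarrow> t \<le> \<tau> \<longrightarrow> q \<in> ball p \<delta> \<longrightarrow> y' \<in> ball yt r \<longrightarrow>
        max (c (x + t *\<^sub>R (q - x)) y) (c x y') < max (c x y) (c (x + t *\<^sub>R (q - x)) y'))"
      by (elim exE) (erule that)
    note \<delta> = conjunct1[OF H]
    note r = conjunct1[OF conjunct2[OF H]]
    note \<tau> = conjunct1[OF conjunct2[OF conjunct2[OF H]]]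
    note good = conjunct2[OF conjunct2[OF conjunct2[OF H]]]
    have xP: "x \<in> Leb (preimg \<gamma> yt r)" using reg r by (simp add: regular_pts_def)
    have good': "max (c (x + t *\<^sub>R (q - x)) y) (c x y') < max (c x y) (c (x + t *\<^sub>R (q - x)) y')"
      if "0 < t" "t \<le> \<tau>" "q \<in> ball p \<delta>" "y' \<in> ball yt r" for t q y'
      using good[rule_format, OF that] .
    show ?thesis
      by (rule combine[OF sg r xP A xA \<delta> \<tau>, of p "\<lambda>x' y'. max (c x' y) (c x y') < max (c x y) (c x' y')", OF good'])
  qed
  show ?thesis
  proof (intro conjI ballI allI impI)
    fix y assume "y \<noteq> yt"
    moreover have "UNIV \<in> sets lebesgue" by simp
    ultimately have "\<exists>(x', y') \<in> regular_pts \<gamma>. x' \<in> UNIV \<and> max (c x' y) (c x y') < max (c x y) (c x' y')"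
      using main[of UNIV y] Leb_UNIV by blast
    then obtain pr where "pr \<in> regular_pts \<gamma>" "case pr of (x', y') \<Rightarrow> x' \<in> UNIV \<and> max (c x' y) (c x y') < max (c x y) (c x' y')"
      by blast
    then show "\<exists>(x', y') \<in> regular_pts \<gamma>. max (c x' y) (c x y') < max (c x y) (c x' y')"
      by (cases pr) auto
  next
    fix A y assume "A \<in> sets borel" "x \<in> Leb A" "y \<noteq> yt"
    moreover have "A \<in> sets lebesgue" using \<open>A \<in> sets borel\<close> by simp
    ultimately show "\<exists>(x', y') \<in> regular_pts \<gamma>. x' \<in> A \<and> max (c x' y) (c x y') < max (c x y) (c x' y')"
      using main by blast
  qed
qed

end
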